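(* Let $d\in\mathbb N$, let $\emptyset\neq\Theta\subset\mathbb R^d$ be an orientable $C^1$-hypersurface of positive reach, let $\mu\colon\mathbb R^d\to\mathbb R^d$ be intrinsic Lipschitz continuous on $\mathbb R^d\setminus\Theta$, and let $\mathfrak n\colon\Theta\to\mathbb R^d$ be a normal vector along $\Theta$. Then for every $x\in\Theta$ and every $s\in\{+,-\}$ the limit $\lim_{h\downarrow0}\mu(x+sh\,\mathfrak n(x))$ exists in $\mathbb R^d$.
   Context: $\|\cdot\|$ is the Euclidean norm. A nonempty $\Theta\subset\mathbb R^d$ is a $C^1$-hypersurface if for every $x\in\Theta$ there are open $U,V$ with $x\in U$ and a $C^1$-diffeomorphism $\phi\colon U\to V$ with $\phi(\Theta\cap U)=(\mathbb R^{d-1}\times\{0\})\cap V$ ($\{0\}$ if $d=1$). A normal vector along $\Theta$ is a continuous unit-length $\mathfrak n\colon\Theta\to\mathbb R^d$ orthogonal at each $x$ to every tangent vector $\gamma'(0)$ of a $C^1$-curve $\gamma$ in $\Theta$ with $\gamma(0)=x$; orientable means one exists. $\mathrm{reach}(\Theta)=\sup\{\varepsilon\ge0:$ every $x$ with $\inf_{y\in\Theta}\|x-y\|<\varepsilon$ has a unique nearest point in $\Theta\}$; positive reach means $\mathrm{reach}(\Theta)>0$. Intrinsic Lipschitz continuity on $A$: $\|f(x)-f(y)\|\le L\rho_A(x,y)$ for all $x,y\in A$, where $\rho_A(x,y)$ is the infimum of the lengths $l(\gamma)=\sup\sum_k\|\gamma(t_k)-\gamma(t_{k-1})\|$ of continuous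 curves $\gamma\colon[0,1]\to A$ from $x$ to $y$. *)

theory Defs
  imports "HOL-Analysis.Analysis"
begin

definition C1_on :: "'a::euclidean_space set \<Rightarrow> ('a \<Rightarrow> 'b::euclidean_space) \<Rightarrow> bool" where
  "C1_on U f \<longleftrightarrow> (\<exists>f'. (\<forall>x\<in>U. (f has_derivative blinfun_apply (f' x)) (at x)) \<and> continuous_on U f')"

definition C1_diffeo :: "('a::euclidean_space \<Rightarrow> 'a) \<Rightarrow> 'a set \<Rightarrow> 'a set \<Rightarrow> bool" where
  "C1_diffeo \<phi> U V \<longleftrightarrow> open U \<and> open V \<and> bij_betw \<phi> U V \<and> C1_on U \<phi> \<and> C1_on V (inv_into U \<phi>)"

(* C^1-hypersurface; the model hyperplane R^(d-1) x {0} is the coordinate hyperplane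
   orthogonal to a standard basis vector b (for d = 1 this is {0}) *)
definition C1_hypersurface :: "'a::euclidean_space set \<Rightarrow> bool" where
  "C1_hypersurface \<Theta> \<longleftrightarrow> \<Theta> \<noteq> {} \<and>
     (\<forall>x\<in>\<Theta>. \<exists>U V \<phi> b. x \<in> U \<and> C1_diffeo \<phi> U V \<and> b \<in> Basis \<and>
        \<phi> ` (\<Theta> \<inter> U) = {y. y \<bullet> b = 0} \<inter> V)"

definition C1_curve_on :: "real set \<Rightarrow> (real \<Rightarrow> 'a::euclidean_space) \<Rightarrow> (real \<Rightarrow> 'a) \<Rightarrow> bool" where
  "C1_curve_on I \<gamma> \<gamma>' \<longleftrightarrow> (\<forall>t\<in>I. (\<gamma> has_vector_derivative \<gamma>' t) (at t)) \<and> continuous_on I \<gamma>'"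

definition tangent_vector :: "'a::euclidean_space set \<Rightarrow> 'a \<Rightarrow> 'a \<Rightarrow> bool" where
  "tangent_vector \<Theta> x v \<longleftrightarrow> (\<exists>\<epsilon>>0. \<exists>\<gamma> \<gamma>'. C1_curve_on {-\<epsilon><..<\<epsilon>} \<gamma> \<gamma>' \<and>
      (\<forall>t\<in>{-\<epsilon><..<\<epsilon>}. \<gamma> t \<in> \<Theta>) \<and> \<gamma> 0 = x \<and> \<gamma>' 0 = v)"

definition normal_vector_along :: "'a::euclidean_space set \<Rightarrow> ('a \<Rightarrow> 'a) \<Rightarrow> bool" where
  "normal_vector_along \<Theta> n \<longleftrightarrow> continuous_on \<Theta> n \<and>
     (\<forall>x\<in>\<Theta>. norm (n x) = 1 \<and> (\<forall>v. tangent_vector \<Theta> x v \<longrightarrow> n x \<bullet> v = 0))"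

definition orientable :: "'a::euclidean_space set \<Rightarrow> bool" where
  "orientable \<Theta> \<longleftrightarrow> (\<exists>n. normal_vector_along \<Theta> n)"

definition reach :: "'a::euclidean_space set \<Rightarrow> ereal" where
  "reach \<Theta> = Sup (ereal ` {\<epsilon>. \<epsilon> \<ge> 0 \<and>
      (\<forall>x. infdist x \<Theta> < \<epsilon> \<longrightarrow> (\<exists>!y. y \<in> \<Theta> \<and> dist x y = infdist x \<Theta>))})"

definition curve_length :: "(real \<Rightarrow> 'a::euclidean_space) \<Rightarrow> ereal" where
  "curve_length \<gamma> = Sup {ereal (\<Sum>k<m. dist (\<gamma> (t (Suc k))) (\<gamma> (t k))) | m t.
      t 0 = 0 \<and> t m = 1 \<and> (\<forall>k<m. t k \<le> t (Suc k))}"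

(* intrinsic metric rho_A (infimum over continuous curves in A; +infinity if none) *)
definition intrinsic_dist :: "'a::euclidean_space set \<Rightarrow> 'a \<Rightarrow> 'a \<Rightarrow> ereal" where
  "intrinsic_dist A x y = Inf {curve_length \<gamma> | \<gamma>.
      continuous_on {0..1} \<gamma> \<and> \<gamma> ` {0..1} \<subseteq> A \<and> \<gamma> 0 = x \<and> \<gamma> 1 = y}"

definition intrinsic_lipschitz_on :: "'a::euclidean_space set \<Rightarrow> ('a \<Rightarrow> 'b::real_normed_vector) \<Rightarrow> bool" where
  "intrinsic_lipschitz_on A f \<longleftrightarrow> (\<exists>L\<ge>0. \<forall>x\<in>A. \<forall>y\<in>A.
      ereal (norm (f x - f y)) \<le> ereal L * intrinsic_dist A x y)"

end

theory Submission
  imports Defs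
begin

lemma curve_length_line:
  fixes a b :: "'a::euclidean_space"
  shows "curve_length (\<lambda>t. a + t *\<^sub>R (b - a)) \<le> ereal (dist a b)"
  unfolding curve_length_def
proof (rule Sup_least, clarify)
  fix m and t :: "nat \<Rightarrow> real"
  assume t0: "t 0 = 0" and tm: "t m = 1" and mono: "\<forall>k<m. t k \<le> t (Suc k)"
  have "(\<Sum>k<m. dist (a + t (Suc k) *\<^sub>R (b - a)) (a + t k *\<^sub>R (b - a)))
      = (\<Sum>k<m. (t (Suc k) - t k) * norm (b - a))"
  proof (rule sum.cong)
    fix k assume "k \<in> {..<m}"
    then have "t k \<le> t (Suc k)" using mono by auto
    have "dist (a + t (Suc k) *\<^sub>R (b - a)) (a + t k *\<^sub>R (b - a))
        = norm ((t (Suc k) - t k) *\<^sub>R (b - a))"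
      by (simp add: dist_norm algebra_simps)
    also have "\<dots> = (t (Suc k) - t k) * norm (b - a)"
      using \<open>t k \<le> t (Suc k)\<close> by simp
    finally show "dist (a + t (Suc k) *\<^sub>R (b - a)) (a + t k *\<^sub>R (b - a))
      = (t (Suc k) - t k) * norm (b - a)" .
  qed simp
  also have "\<dots> = (\<Sum>k<m. t (Suc k) - t k) * norm (b - a)"
    by (simp add: sum_distrib_right)
  also have "\<dots> = dist a b"
    by (simp add: sum_lessThan_telescope t0 tm dist_norm norm_minus_commute)
  finally show "ereal (\<Sum>k<m. dist (a + t (Suc k) *\<^sub>R (b - a)) (a + t k *\<^sub>R (b - a))) \<le> ereal (dist a b)"
    by simp
qed

lemma normal_off:
  fixes \<Theta> :: "'a::euclidean_space set" and n :: "'a \<Rightarrow> 'a"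
  assumes hyp: "C1_hypersurface \<Theta>" and nv: "normal_vector_along \<Theta> n" and x: "x \<in> \<Theta>"
  shows "\<exists>\<delta>>0. \<forall>t. 0 < \<bar>t\<bar> \<and> \<bar>t\<bar> < \<delta> \<longrightarrow> x + t *\<^sub>R n x \<notin> \<Theta>"
proof -
  obtain U V \<phi> b where xU: "x \<in> U" and dif: "C1_diffeo \<phi> U V" and bB: "b \<in> Basis"
    and img: "\<phi> ` (\<Theta> \<inter> U) = {y. y \<bullet> b = 0} \<inter> V"
    using hyp x unfolding C1_hypersurface_def by blast
  define \<psi> where "\<psi> = inv_into U \<phi>"
  have oU: "open U" and oV: "open V" and bij: "bij_betw \<phi> U V"
    using dif unfolding C1_diffeo_def by auto
  obtain \<phi>' where d\<phi>: "\<And>y. y \<in> U \<Longrightarrow> (\<phi> has_derivative blinfun_apply (\<phi>' y)) (at y)"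
    using dif unfolding C1_diffeo_def C1_on_def by blast
  obtain \<psi>' where d\<psi>: "\<And>y. y \<in> V \<Longrightarrow> (\<psi> has_derivative blinfun_apply (\<psi>' y)) (at y)"
    and c\<psi>: "continuous_on V \<psi>'"
    using dif unfolding C1_diffeo_def C1_on_def \<psi>_def by blast
  have inj: "inj_on \<phi> U" using bij by (simp add: bij_betw_def)
  have \<psi>\<phi>: "\<psi> (\<phi> y) = y" if "y \<in> U" for y
    unfolding \<psi>_def using inj that by simp
  have \<phi>xV: "\<phi> x \<in> V" using bij xU by (auto simp: bij_betw_def)
  have \<phi>xH: "\<phi> x \<bullet> b = 0" using img x xU by blast
  define w where "w = \<phi>' x (n x)"
  have inv: "\<psi>' (\<phi> x) (\<phi>' x v) = v" for v
  proof -
    have "((\<psi> \<circ> \<phi>) has_derivative (\<psi>' (\<phi> x) \<circ> \<phi>' x)) (at x)"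
      by (rule diff_chain_at[OF d\<phi>[OF xU] d\<psi>[OF \<phi>xV]])
    moreover have "((\<psi> \<circ> \<phi>) has_derivative id) (at x)"
      by (rule has_derivative_transform_within_open[OF has_derivative_id oU xU]) (simp add: \<psi>\<phi>)
    ultimately have "(\<psi>' (\<phi> x) \<circ> \<phi>' x) = id" by (rule has_derivative_unique)
    then show ?thesis by (metis comp_apply id_apply)
  qed
  have wb: "w \<bullet> b \<noteq> 0"
  proof
    assume wb0: "w \<bullet> b = 0"
    obtain e where e: "e > 0" "ball (\<phi> x) e \<subseteq> V" using oV \<phi>xV open_contains_ball by blast
    define \<epsilon> where "\<epsilon> = e / (norm w + 1)"
    have \<epsilon>: "\<epsilon> > 0" using e unfolding \<epsilon>_def by (intro divide_pos_pos) (auto intro: add_nonneg_pos)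
    have inV: "\<phi> x + t *\<^sub>R w \<in> V" if "t \<in> {-\<epsilon><..<\<epsilon>}" for t
    proof -
      have p: "0 < norm w + 1" by (simp add: add_nonneg_pos)
      have "\<bar>t\<bar> \<le> e / (norm w + 1)" using that unfolding \<epsilon>_def by auto
      then have "\<bar>t\<bar> * norm w \<le> e / (norm w + 1) * norm w" by (rule mult_right_mono) simp
      also have "\<dots> = e * norm w / (norm w + 1)" by simp
      also have "\<dots> < e" using e p by (simp add: pos_divide_less_eq)
      finally have "dist (\<phi> x) (\<phi> x + t *\<^sub>R w) < e" by (simp add: dist_norm)
      then show ?thesis using e by auto
    qed
    define \<gamma> where "\<gamma> t = \<psi> (\<phi> x + t *\<^sub>R w)" for t
    define \<gamma>' where "\<gamma>' t = \<psi>' (\<phi> x + t *\<^sub>R w) w" for t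
    have "C1_curve_on {-\<epsilon><..<\<epsilon>} \<gamma> \<gamma>'"
      unfolding C1_curve_on_def
    proof
      show "\<forall>t\<in>{-\<epsilon><..<\<epsilon>}. (\<gamma> has_vector_derivative \<gamma>' t) (at t)"
      proof
        fix t assume t: "t \<in> {-\<epsilon><..<\<epsilon>}"
        have l: "((\<lambda>t. \<phi> x + t *\<^sub>R w) has_derivative (\<lambda>h. h *\<^sub>R w)) (at t)"
          by (auto intro!: derivative_eq_intros)
        have "((\<psi> \<circ> (\<lambda>t. \<phi> x + t *\<^sub>R w)) has_derivative (\<psi>' (\<phi> x + t *\<^sub>R w) \<circ> (\<lambda>h. h *\<^sub>R w))) (at t)"
          by (rule diff_chain_at[OF l d\<psi>[OF inV[OF t]]])
        then show "(\<gamma> has_vector_derivative \<gamma>' t) (at t)"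
          unfolding has_vector_derivative_def \<gamma>_def \<gamma>'_def
          by (simp add: o_def blinfun.scaleR_right)
      qed
      have "continuous_on {-\<epsilon><..<\<epsilon>} (\<lambda>t. \<psi>' (\<phi> x + t *\<^sub>R w))"
        by (rule continuous_on_compose2[OF c\<psi>]) (auto intro!: continuous_intros inV)
      then show "continuous_on {-\<epsilon><..<\<epsilon>} \<gamma>'"
        unfolding \<gamma>'_def by (auto intro!: continuous_intros)
    qed
    moreover have "\<forall>t\<in>{-\<epsilon><..<\<epsilon>}. \<gamma> t \<in> \<Theta>"
    proof
      fix t assume t: "t \<in> {-\<epsilon><..<\<epsilon>}"
      have "\<phi> x + t *\<^sub>R w \<in> {y. y \<bullet> b = 0} \<inter> V"
        using inV[OF t] \<phi>xH wb0 by (simp add: inner_add_left)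
      then obtain y where "y \<in> \<Theta> \<inter> U" "\<phi> y = \<phi> x + t *\<^sub>R w" using img by (metis imageE)
      then show "\<gamma> t \<in> \<Theta>" unfolding \<gamma>_def using \<psi>\<phi> by force
    qed
    moreover have "\<gamma> 0 = x" unfolding \<gamma>_def using \<psi>\<phi>[OF xU] by simp
    moreover have "\<gamma>' 0 = n x" unfolding \<gamma>'_def w_def using inv by simp
    ultimately have "tangent_vector \<Theta> x (n x)"
      unfolding tangent_vector_def using \<epsilon> by blast
    then have "n x \<bullet> n x = 0" using nv x unfolding normal_vector_along_def by blast
    moreover have "norm (n x) = 1" using nv x unfolding normal_vector_along_def by blast
    ultimately show False by (simp add: norm_eq_sqrt_inner)
  qed
  define g where "g h = \<phi> (x + h *\<^sub>R n x) \<bullet> b" for h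
  have "DERIV g 0 :> w \<bullet> b"
  proof -
    have l: "((\<lambda>h. x + h *\<^sub>R n x) has_derivative (\<lambda>h. h *\<^sub>R n x)) (at 0)"
      by (auto intro!: derivative_eq_intros)
    have "(((\<lambda>y. y \<bullet> b) \<circ> \<phi> \<circ> (\<lambda>h. x + h *\<^sub>R n x)) has_derivative ((\<lambda>y. y \<bullet> b) \<circ> \<phi>' x \<circ> (\<lambda>h. h *\<^sub>R n x))) (at 0)"
      apply (rule diff_chain_at[OF l])
      apply (rule diff_chain_at)
      using d\<phi>[OF xU] apply simp
      apply (rule bounded_linear_imp_has_derivative)
      apply (simp add: bounded_linear_inner_left)
      done
    then have "((\<lambda>h. \<phi> (x + h *\<^sub>R n x) \<bullet> b) has_derivative (\<lambda>h. \<phi>' x (h *\<^sub>R n x) \<bullet> b)) (at 0)"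
      by (simp add: o_def)
    then have "((\<lambda>h. \<phi> (x + h *\<^sub>R n x) \<bullet> b) has_derivative (*) (w \<bullet> b)) (at 0)"
      by (rule has_derivative_eq_rhs) (auto simp: blinfun.scaleR_right w_def fun_eq_iff)
    moreover have "g = (\<lambda>h. \<phi> (x + h *\<^sub>R n x) \<bullet> b)" by (simp add: fun_eq_iff g_def)
    ultimately show ?thesis
      unfolding has_field_derivative_def by simp
  qed
  have g0: "g 0 = 0" using \<phi>xH by (simp add: g_def)
  obtain d where d: "d > 0" "\<forall>h>0. h < d \<longrightarrow> g h \<noteq> 0 \<and> g (- h) \<noteq> 0"
  proof (cases "w \<bullet> b > 0")
    case True
    obtain d1 where d1: "d1 > 0" "\<forall>h>0. h < d1 \<longrightarrow> g 0 < g (0 + h)"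
      using DERIV_pos_inc_right[OF \<open>DERIV g 0 :> w \<bullet> b\<close> True] by blast
    obtain d2 where d2: "d2 > 0" "\<forall>h>0. h < d2 \<longrightarrow> g (0 - h) < g 0"
      using DERIV_pos_inc_left[OF \<open>DERIV g 0 :> w \<bullet> b\<close> True] by blast
    show ?thesis using d1 d2 g0 by (intro that[of "min d1 d2"]) fastforce+
  next
    case False
    then have neg: "w \<bullet> b < 0" using wb by linarith
    obtain d1 where d1: "d1 > 0" "\<forall>h>0. h < d1 \<longrightarrow> g 0 > g (0 + h)"
      using DERIV_neg_dec_right[OF \<open>DERIV g 0 :> w \<bullet> b\<close> neg] by blast
    obtain d2 where d2: "d2 > 0" "\<forall>h>0. h < d2 \<longrightarrow> g (0 - h) > g 0"
      using DERIV_neg_dec_left[OF \<open>DERIV g 0 :> w \<bullet> b\<close> neg] by blast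
    show ?thesis using d1 d2 g0 by (intro that[of "min d1 d2"]) fastforce+
  qed
  obtain r where r: "r > 0" "ball x r \<subseteq> U" using oU xU open_contains_ball by blast
  have "\<forall>t. 0 < \<bar>t\<bar> \<and> \<bar>t\<bar> < min d r \<longrightarrow> x + t *\<^sub>R n x \<notin> \<Theta>"
  proof (intro allI impI notI)
    fix t assume t: "0 < \<bar>t\<bar> \<and> \<bar>t\<bar> < min d r" and inT: "x + t *\<^sub>R n x \<in> \<Theta>"
    have "norm (n x) = 1" using nv x unfolding normal_vector_along_def by blast
    then have "x + t *\<^sub>R n x \<in> ball x r" using t by (simp add: dist_norm)
    then have "x + t *\<^sub>R n x \<in> \<Theta> \<inter> U" using r inT by auto
    then have "g t = 0" using img unfolding g_def by blast
    moreover have "g t \<noteq> 0"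
    proof (cases "t > 0")
      case True then show ?thesis using d t by auto
    next
      case False then have "-t > 0" using t by auto
      then show ?thesis using d(2)[rule_format, of "-t"] t by auto
    qed
    ultimately show False by simp
  qed
  then show ?thesis using d r by (intro exI[of _ "min d r"]) auto
qed

theorem lemma2:
  fixes \<Theta> :: "'a::euclidean_space set"
    and \<mu> :: "'a \<Rightarrow> 'a"
    and n :: "'a \<Rightarrow> 'a"
  assumes "C1_hypersurface \<Theta>"
    and "orientable \<Theta>"
    and "reach \<Theta> > 0"
    and "intrinsic_lipschitz_on (UNIV - \<Theta>) \<mu>"
    and "normal_vector_along \<Theta> n"
  shows "\<forall>x\<in>\<Theta>. \<forall>s\<in>{1, -1::real}.
           \<exists>l. ((\<lambda>h. \<mu> (x + (s * h) *\<^sub>R n x)) \<longlongrightarrow> l) (at_right 0)"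
proof (intro ballI)
  fix x s assume x: "x \<in> \<Theta>" and s: "s \<in> {1, -1::real}"
  obtain L where L: "L \<ge> 0" and Lip: "\<And>p q. p \<in> UNIV - \<Theta> \<Longrightarrow> q \<in> UNIV - \<Theta> \<Longrightarrow>
      ereal (norm (\<mu> p - \<mu> q)) \<le> ereal L * intrinsic_dist (UNIV - \<Theta>) p q"
    using assms(4) unfolding intrinsic_lipschitz_on_def by blast
  obtain \<delta> where \<delta>: "\<delta> > 0" and off: "\<And>t. 0 < \<bar>t\<bar> \<Longrightarrow> \<bar>t\<bar> < \<delta> \<Longrightarrow> x + t *\<^sub>R n x \<notin> \<Theta>"
    using normal_off[OF assms(1) assms(5) x] by blast
  have nx: "norm (n x) = 1" using assms(5) x unfolding normal_vector_along_def by blast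
  have as: "\<bar>s\<bar> = 1" using s by auto
  define P where "P h = x + (s * h) *\<^sub>R n x" for h
  define X where "X = {0<..<\<delta>}"
  have PX: "P h \<in> UNIV - \<Theta>" if "h \<in> X" for h
    using off[of "s * h"] that as unfolding P_def X_def by (auto simp: abs_mult)
  have "L-lipschitz_on X (\<mu> \<circ> P)"
  proof (rule lipschitz_onI)
    show "0 \<le> L" by fact
    fix h1 h2 assume h1: "h1 \<in> X" and h2: "h2 \<in> X"
    define \<gamma> where "\<gamma> t = P h1 + t *\<^sub>R (P h2 - P h1)" for t
    have \<gamma>P: "\<gamma> t = P ((1 - t) * h1 + t * h2)" for t
      unfolding \<gamma>_def P_def by (simp add: algebra_simps scaleR_left_diff_distrib)
    have "\<gamma> ` {0..1} \<subseteq> UNIV - \<Theta>"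
    proof
      fix y assume "y \<in> \<gamma> ` {0..1}"
      then obtain t where t: "t \<in> {0..1}" "y = \<gamma> t" by auto
      have "(1 - t) * min h1 h2 + t * min h1 h2 \<le> (1 - t) * h1 + t * h2"
        using t by (intro add_mono mult_left_mono) auto
      moreover have "(1 - t) * h1 + t * h2 \<le> (1 - t) * max h1 h2 + t * max h1 h2"
        using t by (intro add_mono mult_left_mono) auto
      ultimately have "(1 - t) * h1 + t * h2 \<in> X" using h1 h2 unfolding X_def
        by (auto simp: algebra_simps)
      then show "y \<in> UNIV - \<Theta>" using PX t \<gamma>P by auto
    qed
    moreover have "continuous_on {0..1} \<gamma>" unfolding \<gamma>_def by (intro continuous_intros)
    ultimately have "intrinsic_dist (UNIV - \<Theta>) (P h1) (P h2) \<le> curve_length \<gamma>"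
      unfolding intrinsic_dist_def \<gamma>_def by (intro Inf_lower) auto
    also have "\<dots> \<le> ereal (dist (P h1) (P h2))"
      unfolding \<gamma>_def by (rule curve_length_line)
    also have "dist (P h1) (P h2) = dist h1 h2"
    proof -
      have "P h1 - P h2 = (s * (h1 - h2)) *\<^sub>R n x" unfolding P_def by (simp add: algebra_simps)
      then show ?thesis using nx as by (simp add: dist_norm abs_mult)
    qed
    finally have "ereal L * intrinsic_dist (UNIV - \<Theta>) (P h1) (P h2) \<le> ereal L * ereal (dist h1 h2)"
      using L by (intro ereal_mult_left_mono) auto
    with Lip[OF PX[OF h1] PX[OF h2]]
    have "ereal (norm (\<mu> (P h1) - \<mu> (P h2))) \<le> ereal L * ereal (dist h1 h2)"
      by (rule order_trans)
    then show "dist ((\<mu> \<circ> P) h1) ((\<mu> \<circ> P) h2) \<le> L * dist h1 h2"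
      by (simp add: dist_norm)
  qed
  then have "uniformly_continuous_on X (\<mu> \<circ> P)" by (rule lipschitz_on_uniformly_continuous)
  moreover have "0 \<in> closure X" using \<delta> unfolding X_def by simp
  ultimately obtain l where l: "((\<mu> \<circ> P) \<longlongrightarrow> l) (at 0 within X)"
    by (rule uniformly_continuous_on_extension_at_closure)
  have "at (0::real) within X = at_right 0"
    unfolding X_def by (rule at_within_nhd[of _ "{..<\<delta>}"]) (use \<delta> in auto)
  then have "((\<mu> \<circ> P) \<longlongrightarrow> l) (at_right 0)" using l by simp
  then show "\<exists>l. ((\<lambda>h. \<mu> (x + (s * h) *\<^sub>R n x)) \<longlongrightarrow> l) (at_right 0)"
    unfolding P_def o_def by blast
qed

end
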